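(* Let $k$ be a field of characteristic $p>0$, let $1\le c<p$, and let $a\ge b\ge1$ be integers, $d=a+b+c$. Then the Young module $Y^{(a,b,1^c)}$ is a direct summand of the signed permutation module $M^{(a,b|c)}$.
   Context: For a sequence $\gamma=(\gamma_1,\dots,\gamma_t)$ of nonnegative integers summing to $r$, $\Sigma_\gamma=\Sigma_{\gamma_1}\times\dots\times\Sigma_{\gamma_t}\le\Sigma_r$ (the first factor permuting the first $\gamma_1$ letters, etc.). For $\lambda=(\lambda_1,\dots,\lambda_m)$, $\mu=(\mu_1,\dots,\mu_n)$ with $|\lambda|+|\mu|=d$, the signed permutation module is $M^{(\lambda|\mu)}=\operatorname{ind}_{\Sigma_\lambda\times\Sigma_\mu}^{\Sigma_d}(k\boxtimes\operatorname{sgn})$, with $k$ trivial for $\Sigma_\lambda$ and $\operatorname{sgn}$ the sign representation of $\Sigma_\mu$; thus $M^{(a,b|c)}=\operatorname{ind}_{\Sigma_a\times\Sigma_b\times\Sigma_c}^{\Sigma_d}(k\boxtimes k\boxtimes\operatorname{sgn})$. For a partition $\lambda$ of $d$, the Young module $Y^\lambda$ is the unique indecomposable direct summand of the permutation module $M^\lambda=\operatorname{ind}_{\Sigma_\lambda}^{\Sigma_d}k$ containing the Specht module $S^\lambda$. *)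

theory Defs
  imports Main "HOL-Combinatorics.Permutations"
begin

text \<open>The letters are {0..<d}; the symmetric
group Sigma_d is the set of g with g permutes {0..<d}, with product composition.
All modules considered are subsets of the function space (nat => nat) => 'k, with
Sigma_d acting by (x . f) g = f (g o x).\<close>

type_synonym 'k fn = "(nat \<Rightarrow> nat) \<Rightarrow> 'k"

definition letters :: "nat \<Rightarrow> nat set" where
  "letters d = {0..<d}"

definition act :: "(nat \<Rightarrow> nat) \<Rightarrow> 'k fn \<Rightarrow> 'k fn" where
  "act x f = (\<lambda>g. f (g \<circ> x))"

definition zerofn :: "'k::zero fn" where
  "zerofn = (\<lambda>g. 0)"

definition addfn :: "'k::plus fn \<Rightarrow> 'k fn \<Rightarrow> 'k fn" where
  "addfn f h = (\<lambda>g. f g + h g)"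

definition smultfn :: "'k::times \<Rightarrow> 'k fn \<Rightarrow> 'k fn" where
  "smultfn c f = (\<lambda>g. c * f g)"

text \<open>Block index of a letter j for a composition gamma (list of block sizes):
the i with gamma_1+...+gamma_i <= j < gamma_1+...+gamma_(i+1).\<close>
definition blk :: "nat list \<Rightarrow> nat \<Rightarrow> nat" where
  "blk \<gamma> j = card {i. i < length \<gamma> \<and> sum_list (take (Suc i) \<gamma>) \<le> j}"

text \<open>Column index of position j in the row blk gamma j of the Young diagram.\<close>
definition colx :: "nat list \<Rightarrow> nat \<Rightarrow> nat" where
  "colx \<gamma> j = j - sum_list (take (blk \<gamma> j) \<gamma>)"

definition young_subgroup :: "nat \<Rightarrow> nat list \<Rightarrow> (nat \<Rightarrow> nat) set" where
  "young_subgroup d \<gamma> =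
     {h. h permutes letters d \<and> (\<forall>j\<in>letters d. blk \<gamma> (h j) = blk \<gamma> j)}"

text \<open>Induced module ind_H^{Sigma_d} chi, realised as
{f supported on Sigma_d | f (h o g) = chi h * f g for h in H}.\<close>
definition ind_module :: "nat \<Rightarrow> (nat \<Rightarrow> nat) set \<Rightarrow> ((nat \<Rightarrow> nat) \<Rightarrow> 'k::field) \<Rightarrow> 'k fn set" where
  "ind_module d H \<chi> =
     {f. (\<forall>g. \<not> g permutes letters d \<longrightarrow> f g = 0) \<and>
         (\<forall>h\<in>H. \<forall>g. g permutes letters d \<longrightarrow> f (h \<circ> g) = \<chi> h * f g)}"

text \<open>Signed permutation module M^(lambda|mu): induced from
Sigma_lambda x Sigma_mu = Sigma_(lambda @ mu) of trivial x sign.  The character takes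
the sign of the part of h acting on the last |mu| letters.\<close>
definition sign_part :: "nat \<Rightarrow> (nat \<Rightarrow> nat) \<Rightarrow> 'k::field" where
  "sign_part n h = of_int (sign (\<lambda>j. if n \<le> j then h j else j))"

definition signed_perm_module :: "nat list \<Rightarrow> nat list \<Rightarrow> 'k::field fn set" where
  "signed_perm_module lam mu =
     ind_module (sum_list lam + sum_list mu) (young_subgroup (sum_list lam + sum_list mu) (lam @ mu))
       (sign_part (sum_list lam))"

definition perm_module :: "nat list \<Rightarrow> 'k::field fn set" where
  "perm_module lam = ind_module (sum_list lam) (young_subgroup (sum_list lam) lam) (\<lambda>h. 1)"

definition is_submodule :: "nat \<Rightarrow> 'k::field fn set \<Rightarrow> 'k fn set \<Rightarrow> bool" where
  "is_submodule d U M \<longleftrightarrow> U \<subseteq> M \<and> zerofn \<in> U \<and>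
     (\<forall>f\<in>U. \<forall>h\<in>U. addfn f h \<in> U) \<and> (\<forall>c. \<forall>f\<in>U. smultfn c f \<in> U) \<and>
     (\<forall>x. x permutes letters d \<longrightarrow> (\<forall>f\<in>U. act x f \<in> U))"

definition is_direct_sum :: "nat \<Rightarrow> 'k::field fn set \<Rightarrow> 'k fn set \<Rightarrow> 'k fn set \<Rightarrow> bool" where
  "is_direct_sum d M U W \<longleftrightarrow> is_submodule d U M \<and> is_submodule d W M \<and>
     U \<inter> W = {zerofn} \<and> M = {addfn u w |u w. u \<in> U \<and> w \<in> W}"

definition is_summand :: "nat \<Rightarrow> 'k::field fn set \<Rightarrow> 'k fn set \<Rightarrow> bool" where
  "is_summand d M U \<longleftrightarrow> (\<exists>W. is_direct_sum d M U W)"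

definition indecomposable :: "nat \<Rightarrow> 'k::field fn set \<Rightarrow> bool" where
  "indecomposable d U \<longleftrightarrow> U \<noteq> {zerofn} \<and>
     (\<forall>U1 U2. is_direct_sum d U U1 U2 \<longrightarrow> U1 = {zerofn} \<or> U2 = {zerofn})"

definition module_iso :: "nat \<Rightarrow> 'k::field fn set \<Rightarrow> 'k fn set \<Rightarrow> bool" where
  "module_iso d U V \<longleftrightarrow> (\<exists>\<phi>. bij_betw \<phi> U V \<and>
     (\<forall>f\<in>U. \<forall>h\<in>U. \<phi> (addfn f h) = addfn (\<phi> f) (\<phi> h)) \<and>
     (\<forall>c. \<forall>f\<in>U. \<phi> (smultfn c f) = smultfn c (\<phi> f)) \<and>
     (\<forall>x. x permutes letters d \<longrightarrow> (\<forall>f\<in>U. \<phi> (act x f) = act x (\<phi> f))))"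

definition kspan :: "'k::field fn set \<Rightarrow> 'k fn set" where
  "kspan S = {f. \<exists>F c. finite F \<and> F \<subseteq> S \<and> f = (\<lambda>g. \<Sum>v\<in>F. c v * v g)}"

text \<open>The basis vector of M^lambda attached to the coset Sigma_lambda g
corresponds to the tabloid in which letter j lies in row blk lambda (g j).
The tableau t_g puts letter j into the box (blk lambda (g j), colx lambda (g j)).\<close>
definition tabloid_vec :: "nat list \<Rightarrow> (nat \<Rightarrow> nat) \<Rightarrow> 'k::field fn" where
  "tabloid_vec lam g = (\<lambda>g'. if g' permutes letters (sum_list lam) \<and>
       (\<forall>j\<in>letters (sum_list lam). blk lam (g' j) = blk lam (g j)) then 1 else 0)"

definition column_stabilizer :: "nat list \<Rightarrow> (nat \<Rightarrow> nat) \<Rightarrow> (nat \<Rightarrow> nat) set" where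
  "column_stabilizer lam g = {\<sigma>. \<sigma> permutes letters (sum_list lam) \<and>
       (\<forall>j\<in>letters (sum_list lam). colx lam (g (\<sigma> j)) = colx lam (g j))}"

definition polytabloid :: "nat list \<Rightarrow> (nat \<Rightarrow> nat) \<Rightarrow> 'k::field fn" where
  "polytabloid lam g = (\<lambda>g'. \<Sum>\<sigma>\<in>column_stabilizer lam g.
       of_int (sign \<sigma>) * tabloid_vec lam (g \<circ> inv \<sigma>) g')"

definition specht_module :: "nat list \<Rightarrow> 'k::field fn set" where
  "specht_module lam = kspan {polytabloid lam g | g. g permutes letters (sum_list lam)}"

text \<open>Y is (a representative of) the Young module Y^lambda: an indecomposable direct
summand of M^lambda containing the Specht module S^lambda.\<close>
definition is_young_module :: "nat list \<Rightarrow> 'k::field fn set \<Rightarrow> bool" where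
  "is_young_module lam Y \<longleftrightarrow> is_summand (sum_list lam) (perm_module lam) Y \<and>
     indecomposable (sum_list lam) Y \<and> specht_module lam \<subseteq> Y"

end

theory Submission
  imports Defs Complex_Main "HOL-Library.Function_Algebras"
begin

lemma addfn_eq: "addfn f h = f + h"
  by (simp add: addfn_def fun_eq_iff)
lemma zerofn_eq: "zerofn = 0"
  by (simp add: zerofn_def fun_eq_iff)

interpretation fv: vector_space "smultfn :: 'k::field \<Rightarrow> 'k fn \<Rightarrow> 'k fn"
  by unfold_locales (auto simp: smultfn_def fun_eq_iff algebra_simps)

lemma smultfn_neg1: "smultfn (-1) f = - (f :: 'k::field fn)"
  by (simp add: smultfn_def fun_eq_iff)

lemma act_add: "act x (f + h) = act x f + act x h"
  by (simp add: act_def fun_eq_iff)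
lemma act_smult: "act x (smultfn c f) = smultfn c (act x f)"
  by (simp add: act_def smultfn_def fun_eq_iff)
lemma act_zero: "act x 0 = 0"
  by (simp add: act_def fun_eq_iff)
lemma act_diff: "act x (f - h) = act x f - act x h"
  by (simp add: act_def fun_eq_iff)

definition Supp :: "nat \<Rightarrow> 'k::field fn set" where
  "Supp d = {f. \<forall>g. \<not> g permutes letters d \<longrightarrow> f g = 0}"
definition delta :: "(nat\<Rightarrow>nat) \<Rightarrow> 'k::field fn" where
  "delta g = (\<lambda>g'. if g = g' then 1 else 0)"
definition PD :: "nat \<Rightarrow> (nat\<Rightarrow>nat) set" where
  "PD d = {g. g permutes letters d}"

lemma finite_PD: "finite (PD d)"
  by (simp add: PD_def letters_def finite_permutations)

lemma sum_fun_apply: "(\<Sum>x\<in>A. F x) g = (\<Sum>x\<in>A. F x g)"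
  for F :: "_ \<Rightarrow> 'k::field fn"
  by (induction A rule: infinite_finite_induct) auto

lemma Supp_span: "Supp d \<subseteq> fv.span (delta ` PD d :: 'k::field fn set)"
proof
  fix f :: "'k::field fn" assume f: "f \<in> Supp d"
  have "f = (\<Sum>g\<in>PD d. smultfn (f g) (delta g))"
  proof (rule ext)
    fix x
    have "(\<Sum>g\<in>PD d. smultfn (f g) (delta g)) x = (\<Sum>g\<in>PD d. if x = g then f g else 0)"
      unfolding sum_fun_apply by (intro sum.cong) (auto simp: smultfn_def delta_def)
    also have "\<dots> = f x" using f finite_PD[of d] by (simp add: Supp_def PD_def)
    finally show "f x = (\<Sum>g\<in>PD d. smultfn (f g) (delta g)) x" by simp
  qed
  also have "\<dots> \<in> fv.span (delta ` PD d)"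
    by (intro fv.span_sum fv.span_scale fv.span_base) auto
  finally show "f \<in> fv.span (delta ` PD d)" .
qed

lemma card_delta: "card (delta ` PD d :: 'k::field fn set) \<le> card (PD d)"
  using card_image_le[OF finite_PD] by blast

lemma indep_Supp_bound:
  assumes "fv.independent B" "B \<subseteq> (Supp d :: 'k::field fn set)"
  shows "finite B \<and> card B \<le> card (PD d)"
proof -
  have "finite B \<and> card B \<le> card (delta ` PD d :: 'k fn set)"
    using fv.independent_span_bound[of "delta ` PD d" B] assms Supp_span[of d] finite_PD[of d]
    by auto
  then show ?thesis using card_delta[where 'k='k, of d] by linarith
qed

lemma dim_Supp: "A \<subseteq> (Supp d :: 'k::field fn set) \<Longrightarrow> fv.dim A \<le> card (PD d)"
proof -
  assume "A \<subseteq> Supp d"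
  then have "A \<subseteq> fv.span (delta ` PD d :: 'k fn set)" using Supp_span[of d] by blast
  then have "fv.dim A \<le> card (delta ` PD d :: 'k fn set)"
    using fv.dim_le_card finite_PD by blast
  then show ?thesis using card_delta[where 'k='k, of d] by linarith
qed

lemma dim_strict:
  assumes A: "fv.subspace A" and AB: "A \<subseteq> B" and BS: "B \<subseteq> (Supp d :: 'k::field fn set)"
    and x: "x \<in> B" "x \<notin> A"
  shows "fv.dim A < fv.dim B"
proof -
  obtain BA where BA: "BA \<subseteq> A" "fv.independent BA" "A \<subseteq> fv.span BA" "card BA = fv.dim A"
    by (rule fv.basis_exists)
  obtain BB where BB: "BB \<subseteq> B" "fv.independent BB" "B \<subseteq> fv.span BB" "card BB = fv.dim B"
    by (rule fv.basis_exists)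
  have "fv.span BA \<subseteq> A" using fv.span_minimal[OF BA(1) A] .
  then have xs: "x \<notin> fv.span BA" using x by auto
  have ind: "fv.independent (insert x BA)" using fv.independent_insertI[OF xs BA(2)] .
  have fBB: "finite BB" using indep_Supp_bound[OF BB(2)] BB(1) BS by auto
  have fBA: "finite BA" using indep_Supp_bound[OF BA(2)] BA(1) AB BS by auto
  have "insert x BA \<subseteq> fv.span BB" using BB(3) x BA(1) AB by auto
  then have "card (insert x BA) \<le> card BB"
    using fv.independent_span_bound[OF fBB ind] by auto
  moreover have "x \<notin> BA" using x BA(1) by auto
  ultimately show ?thesis using BA(4) BB(4) fBA by simp
qed

lemma chain_dec:
  fixes X :: "nat \<Rightarrow> 'k::field fn set"
  assumes "\<And>k. fv.subspace (X k)" "\<And>k. X k \<subseteq> Supp d" "\<And>k. X (Suc k) \<subseteq> X k"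
  shows "\<exists>N. X (Suc N) = X N"
proof (rule ccontr)
  assume "\<nexists>N. X (Suc N) = X N"
  then have lt: "fv.dim (X (Suc k)) < fv.dim (X k)" for k
  proof -
    from \<open>\<nexists>N. X (Suc N) = X N\<close> assms(3)[of k] obtain x where "x \<in> X k" "x \<notin> X (Suc k)" by blast
    then show ?thesis using dim_strict[OF assms(1)[of "Suc k"] assms(3)[of k] assms(2)[of k]] by blast
  qed
  have "fv.dim (X k) + k \<le> fv.dim (X 0)" for k
  proof (induction k)
    case (Suc k) then show ?case using lt[of k] by simp
  qed simp
  from this[of "Suc (fv.dim (X 0))"] show False by simp
qed

lemma chain_inc:
  fixes X :: "nat \<Rightarrow> 'k::field fn set"
  assumes "\<And>k. fv.subspace (X k)" "\<And>k. X k \<subseteq> Supp d" "\<And>k. X k \<subseteq> X (Suc k)"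
  shows "\<exists>N. X (Suc N) = X N"
proof (rule ccontr)
  assume "\<nexists>N. X (Suc N) = X N"
  then have lt: "fv.dim (X k) < fv.dim (X (Suc k))" for k
  proof -
    from \<open>\<nexists>N. X (Suc N) = X N\<close> assms(3)[of k] obtain x where "x \<in> X (Suc k)" "x \<notin> X k" by blast
    then show ?thesis using dim_strict[OF assms(1)[of k] assms(3)[of k] assms(2)[of "Suc k"]] by blast
  qed
  have "k \<le> fv.dim (X k)" for k
  proof (induction k)
    case (Suc k) then show ?case using lt[of k] by simp
  qed simp
  from this[of "Suc (card (PD d))"] dim_Supp[OF assms(2), of "Suc (card (PD d))"] show False by simp
qed


lemma submoduleD:
  assumes "is_submodule d U X"
  shows "U \<subseteq> X" "0 \<in> U" "\<And>f h. f\<in>U \<Longrightarrow> h\<in>U \<Longrightarrow> f + h \<in> U"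
    "\<And>c f. f\<in>U \<Longrightarrow> smultfn c f \<in> U"
    "\<And>x f. x permutes letters d \<Longrightarrow> f \<in> U \<Longrightarrow> act x f \<in> U"
  using assms by (auto simp: is_submodule_def addfn_eq zerofn_eq)

lemma submoduleI:
  assumes "U \<subseteq> X" "0 \<in> U" "\<And>f h. f\<in>U \<Longrightarrow> h\<in>U \<Longrightarrow> f + h \<in> U"
    "\<And>c f. f\<in>U \<Longrightarrow> smultfn c f \<in> U"
    "\<And>x f. x permutes letters d \<Longrightarrow> f \<in> U \<Longrightarrow> act x f \<in> U"
  shows "is_submodule d U X"
  using assms by (auto simp: is_submodule_def addfn_eq zerofn_eq)

lemma submodule_diff:
  assumes "is_submodule d U X" "f \<in> U" "h \<in> U"
  shows "f - (h :: 'k::field fn) \<in> U"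
proof -
  have "f - h = f + smultfn (-1) h" by (simp add: smultfn_neg1)
  then show ?thesis using submoduleD[OF assms(1)] assms(2,3) by metis
qed

lemma submodule_subspace: "is_submodule d U X \<Longrightarrow> fv.subspace U"
  by (auto simp: fv.subspace_def dest: submoduleD)

locale setting =
  fixes d :: nat and M N Y W :: "'k::field fn set" and P :: "'k fn \<Rightarrow> 'k fn" and v :: "'k fn"
  assumes ds: "is_direct_sum d M Y W"
  and indec: "indecomposable d Y"
  and NM: "is_submodule d N M"
  and MS: "M \<subseteq> Supp d"
  and Padd: "\<And>f h. P (f + h) = P f + P h"
  and Psmult: "\<And>c f. P (smultfn c f) = smultfn c (P f)"
  and Pact: "\<And>x f. x permutes letters d \<Longrightarrow> P (act x f) = act x (P f)"
  and PMN: "\<And>f. f \<in> M \<Longrightarrow> P f \<in> N"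
  and vY: "v \<in> Y" and v0: "v \<noteq> 0" and Pv: "P v = v"
begin

lemma YM: "is_submodule d Y M" and WM: "is_submodule d W M" and YW: "Y \<inter> W = {0}"
  and Msum: "M = {u + w |u w. u \<in> Y \<and> w \<in> W}"
  using ds by (auto simp: is_direct_sum_def addfn_eq zerofn_eq)

lemma YsubM: "Y \<subseteq> M" using submoduleD(1)[OF YM] .
lemma NsubM: "N \<subseteq> M" using submoduleD(1)[OF NM] .

lemma P0: "P 0 = 0"
proof -
  have "P 0 = P 0 + P 0" using Padd[of 0 0] by simp
  then show ?thesis by simp
qed

lemma Pdiff: "P (f - h) = P f - P h"
proof -
  have "P (f - h) = P (f + smultfn (-1) h)" by (simp add: smultfn_neg1)
  also have "\<dots> = P f - P h" by (simp only: Padd Psmult) (simp add: smultfn_neg1)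
  finally show ?thesis .
qed

definition pi where "pi m = (THE u. u \<in> Y \<and> (\<exists>w\<in>W. m = u + w))"

lemma pi_unique:
  assumes "u \<in> Y" "w \<in> W" "m = u + w"
  shows "pi m = u"
proof -
  have "u' = u" if "u' \<in> Y" "w' \<in> W" "m = u' + w'" for u' w'
  proof -
    have "u' - u = w - w'" using that assms by (simp add: algebra_simps)
    moreover have "u' - u \<in> Y" using submodule_diff[OF YM] that assms by blast
    moreover have "w - w' \<in> W" using submodule_diff[OF WM] that assms by blast
    ultimately have "u' - u \<in> Y \<inter> W" by simp
    then show ?thesis using YW by simp
  qed
  then show ?thesis unfolding pi_def using assms by (intro the_equality) auto
qed

lemma pi_M: assumes "m \<in> M" shows "pi m \<in> Y" "m - pi m \<in> W"
proof -
  obtain u w where "u \<in> Y" "w \<in> W" "m = u + w" using assms Msum by blast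
  then have "pi m = u" by (rule pi_unique)
  then show "pi m \<in> Y" "m - pi m \<in> W" using \<open>u \<in> Y\<close> \<open>w \<in> W\<close> \<open>m = u + w\<close> by auto
qed

lemma pi_Y: "y \<in> Y \<Longrightarrow> pi y = y"
  using pi_unique[of y 0 y] submoduleD(2)[OF WM] by simp

lemma pi_W: "w \<in> W \<Longrightarrow> pi w = 0"
  using pi_unique[of 0 w w] submoduleD(2)[OF YM] by simp

lemma pi_add: "m \<in> M \<Longrightarrow> m' \<in> M \<Longrightarrow> pi (m + m') = pi m + pi m'"
  by (rule pi_unique[where w = "(m - pi m) + (m' - pi m')"])
     (auto intro: submoduleD(3)[OF YM] submoduleD(3)[OF WM] pi_M)

lemma pi_diff: "m \<in> M \<Longrightarrow> m' \<in> M \<Longrightarrow> pi (m - m') = pi m - pi m'"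
  by (rule pi_unique[where w = "(m - pi m) - (m' - pi m')"])
     (auto intro: submodule_diff[OF YM] submodule_diff[OF WM] pi_M)

lemma pi_smult: "m \<in> M \<Longrightarrow> pi (smultfn c m) = smultfn c (pi m)"
proof -
  assume m: "m \<in> M"
  have e: "smultfn c m = smultfn c (pi m) + smultfn c (m - pi m)"
    by (simp add: smultfn_def fun_eq_iff algebra_simps)
  show ?thesis
    by (rule pi_unique[OF _ _ e]) (auto intro: submoduleD(4)[OF YM] submoduleD(4)[OF WM] pi_M m)
qed

lemma pi_act: "x permutes letters d \<Longrightarrow> m \<in> M \<Longrightarrow> pi (act x m) = act x (pi m)"
proof -
  assume x: "x permutes letters d" and m: "m \<in> M"
  have e: "act x m = act x (pi m) + act x (m - pi m)"
    by (simp add: act_def fun_eq_iff)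
  show ?thesis
    by (rule pi_unique[OF _ _ e]) (auto intro: submoduleD(5)[OF YM] submoduleD(5)[OF WM] pi_M m x)
qed

definition phi where "phi y = pi (P y)"

lemma PY: "y \<in> Y \<Longrightarrow> P y \<in> M" using PMN YsubM NsubM by blast

lemma phi_Y: "y \<in> Y \<Longrightarrow> phi y \<in> Y"
  unfolding phi_def using pi_M(1) PY by blast

lemma phi_add: "y \<in> Y \<Longrightarrow> y' \<in> Y \<Longrightarrow> phi (y + y') = phi y + phi y'"
  unfolding phi_def by (simp add: Padd pi_add PY)
lemma phi_diff: "y \<in> Y \<Longrightarrow> y' \<in> Y \<Longrightarrow> phi (y - y') = phi y - phi y'"
  unfolding phi_def by (simp add: Pdiff pi_diff PY)
lemma phi_smult: "y \<in> Y \<Longrightarrow> phi (smultfn c y) = smultfn c (phi y)"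
  unfolding phi_def by (simp add: Psmult pi_smult PY)
lemma phi_act: "x permutes letters d \<Longrightarrow> y \<in> Y \<Longrightarrow> phi (act x y) = act x (phi y)"
  unfolding phi_def by (simp add: Pact pi_act PY)
lemma phi_0: "phi 0 = 0"
  unfolding phi_def using P0 pi_Y submoduleD(2)[OF YM] by simp
lemma phi_v: "phi v = v"
  unfolding phi_def using Pv pi_Y vY by simp

lemma F_Y: "y \<in> Y \<Longrightarrow> (phi ^^ n) y \<in> Y"
  by (induction n) (auto intro: phi_Y)
lemma F_add: "y \<in> Y \<Longrightarrow> y' \<in> Y \<Longrightarrow> (phi ^^ n) (y + y') = (phi ^^ n) y + (phi ^^ n) y'"
  by (induction n) (auto simp: phi_add F_Y)
lemma F_diff: "y \<in> Y \<Longrightarrow> y' \<in> Y \<Longrightarrow> (phi ^^ n) (y - y') = (phi ^^ n) y - (phi ^^ n) y'"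
  by (induction n) (auto simp: phi_diff F_Y)
lemma F_smult: "y \<in> Y \<Longrightarrow> (phi ^^ n) (smultfn c y) = smultfn c ((phi ^^ n) y)"
  by (induction n) (auto simp: phi_smult F_Y)
lemma F_act: "x permutes letters d \<Longrightarrow> y \<in> Y \<Longrightarrow> (phi ^^ n) (act x y) = act x ((phi ^^ n) y)"
  by (induction n) (auto simp: phi_act F_Y)
lemma F_0: "(phi ^^ n) 0 = 0"
proof (induction n)
  case (Suc n)
  have "(phi ^^ Suc n) 0 = phi ((phi ^^ n) 0)" by (simp only: funpow.simps o_apply)
  also have "\<dots> = 0" by (simp only: Suc phi_0)
  finally show ?case .
qed simp
lemma F_v: "(phi ^^ n) v = v"
  by (induction n) (auto simp: phi_v)

definition I where "I n = (phi ^^ n) ` Y"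
definition K where "K n = {y\<in>Y. (phi ^^ n) y = 0}"

lemma I_sub: "is_submodule d (I n) Y"
proof (rule submoduleI)
  show "I n \<subseteq> Y" unfolding I_def using F_Y by blast
  show "0 \<in> I n" unfolding I_def using F_0[of n] submoduleD(2)[OF YM] by (metis image_eqI)
  show "f + h \<in> I n" if "f \<in> I n" "h \<in> I n" for f h
    using that unfolding I_def
    by (auto simp flip: F_add intro!: imageI submoduleD(3)[OF YM])
  show "smultfn c f \<in> I n" if "f \<in> I n" for c f
    using that unfolding I_def
    by (auto simp flip: F_smult intro!: imageI submoduleD(4)[OF YM])
  show "act x f \<in> I n" if "x permutes letters d" "f \<in> I n" for x f
    using that unfolding I_def
    by (auto simp flip: F_act intro!: imageI submoduleD(5)[OF YM])
qed

lemma K_sub: "is_submodule d (K n) Y"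
proof (rule submoduleI)
  show "K n \<subseteq> Y" unfolding K_def by blast
  show "0 \<in> K n" unfolding K_def using F_0[of n] submoduleD(2)[OF YM] by simp
  show "f + h \<in> K n" if "f \<in> K n" "h \<in> K n" for f h
    using that unfolding K_def by (auto simp: F_add intro: submoduleD(3)[OF YM])
  show "smultfn c f \<in> K n" if "f \<in> K n" for c f
    using that unfolding K_def by (auto simp: F_smult intro: submoduleD(4)[OF YM])
  show "act x f \<in> K n" if "x permutes letters d" "f \<in> K n" for x f
    using that unfolding K_def by (auto simp: F_act act_zero intro: submoduleD(5)[OF YM])
qed

lemma I_Suc: "I (Suc n) = phi ` I n"
  unfolding I_def by (simp add: image_comp)

lemma K_Suc: "K (Suc n) = {y\<in>Y. phi y \<in> K n}"
  unfolding K_def by (auto simp: funpow_Suc_right phi_Y simp del: funpow.simps)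

lemma I_dec: "I (Suc n) \<subseteq> I n"
  unfolding I_def by (auto simp: funpow_Suc_right phi_Y simp del: funpow.simps)

lemma K_inc: "K n \<subseteq> K (Suc n)"
  unfolding K_def by (auto simp: phi_0)

lemma I_stable: "I (Suc n) = I n \<Longrightarrow> I (n + k) = I n"
proof (induction k)
  case (Suc k)
  then have "I (n + Suc k) = phi ` I (n + k)" using I_Suc[of "n+k"] by simp
  also have "\<dots> = phi ` I n" using Suc by simp
  also have "\<dots> = I n" using Suc.prems I_Suc[of n] by simp
  finally show ?case .
qed simp

lemma K_stable: "K (Suc n) = K n \<Longrightarrow> K (n + k) = K n"
proof (induction k)
  case (Suc k)
  then have "K (n + Suc k) = {y\<in>Y. phi y \<in> K (n + k)}" using K_Suc[of "n+k"] by simp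
  also have "\<dots> = {y\<in>Y. phi y \<in> K n}" using Suc by simp
  also have "\<dots> = K n" using Suc.prems K_Suc[of n] by simp
  finally show ?case .
qed simp

lemma exists_stable: "\<exists>n. I (Suc n) = I n \<and> K (Suc n) = K n"
proof -
  have YS: "Y \<subseteq> Supp d" using YsubM MS by blast
  obtain N1 where N1: "I (Suc N1) = I N1"
    using chain_dec[of I d] I_dec submodule_subspace[OF I_sub] submoduleD(1)[OF I_sub] YS by blast
  obtain N2 where N2: "K (Suc N2) = K N2"
    using chain_inc[of K d] K_inc submodule_subspace[OF K_sub] submoduleD(1)[OF K_sub] YS by blast
  have "I (Suc (N1 + N2)) = I N1" using I_stable[OF N1, of "Suc N2"] by simp
  moreover have "I (N1 + N2) = I N1" using I_stable[OF N1, of N2] by simp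
  moreover have "K (Suc (N1 + N2)) = K N2" using K_stable[OF N2, of "Suc N1"] by (simp add: add.commute)
  moreover have "K (N1 + N2) = K N2" using K_stable[OF N2, of N1] by (simp add: add.commute)
  ultimately show ?thesis by metis
qed

lemma fitting:
  assumes "I (Suc n) = I n" "K (Suc n) = K n"
  shows "is_direct_sum d Y (I n) (K n)"
proof -
  have I2: "I (n + n) = I n" using I_stable[OF assms(1)] .
  have K2: "K (n + n) = K n" using K_stable[OF assms(2)] .
  have F2: "(phi ^^ (n + n)) y = (phi ^^ n) ((phi ^^ n) y)" for y by (simp add: funpow_add)
  have int: "I n \<inter> K n = {0}"
  proof
    show "{0} \<subseteq> I n \<inter> K n" using submoduleD(2)[OF I_sub] submoduleD(2)[OF K_sub] by blast
    show "I n \<inter> K n \<subseteq> {0}"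
    proof
      fix x assume x: "x \<in> I n \<inter> K n"
      then obtain z where z: "z \<in> Y" "x = (phi ^^ n) z" unfolding I_def by blast
      have "(phi ^^ (n + n)) z = 0" using x z F2 unfolding K_def by simp
      then have "z \<in> K (n + n)" unfolding K_def using z by simp
      then have "z \<in> K n" using K2 by simp
      then show "x \<in> {0}" using z unfolding K_def by simp
    qed
  qed
  have sum: "Y = {u + w |u w. u \<in> I n \<and> w \<in> K n}"
  proof
    show "Y \<subseteq> {u + w |u w. u \<in> I n \<and> w \<in> K n}"
    proof
      fix y assume y: "y \<in> Y"
      have "(phi ^^ n) y \<in> I (n + n)" using I2 y unfolding I_def by auto
      then obtain z where z: "z \<in> Y" "(phi ^^ n) y = (phi ^^ n) ((phi ^^ n) z)"
        unfolding I_def using F2 by auto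
      define u where "u = (phi ^^ n) z"
      have uI: "u \<in> I n" unfolding u_def I_def using z by blast
      have uY: "u \<in> Y" unfolding u_def using z F_Y by blast
      have "y - u \<in> K n" unfolding K_def
        using submodule_diff[OF YM y uY] F_diff[OF y uY] z u_def by simp
      moreover have "y = u + (y - u)" by simp
      ultimately show "y \<in> {u + w |u w. u \<in> I n \<and> w \<in> K n}" using uI by blast
    qed
    show "{u + w |u w. u \<in> I n \<and> w \<in> K n} \<subseteq> Y"
      using submoduleD(1)[OF I_sub] submoduleD(1)[OF K_sub] submoduleD(3)[OF YM] by blast
  qed
  show ?thesis unfolding is_direct_sum_def addfn_eq zerofn_eq
    using I_sub K_sub int sum by (simp add: zerofn_eq)
qed

lemma phi_bij: "(\<forall>y\<in>Y. phi y = 0 \<longrightarrow> y = 0) \<and> Y \<subseteq> phi ` Y"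
proof -
  obtain n where n: "I (Suc n) = I n" "K (Suc n) = K n" using exists_stable by blast
  have dsn: "is_direct_sum d Y (I n) (K n)" using fitting[OF n] .
  have "v \<in> I n" unfolding I_def using F_v vY by (metis image_eqI)
  then have "I n \<noteq> {0}" using v0 by blast
  then have Kn: "K n = {0}" using indec dsn unfolding indecomposable_def zerofn_eq by blast
  have inj: "y = 0" if "y \<in> Y" "phi y = 0" for y
  proof -
    have "(phi ^^ Suc n) y = 0" using that F_0 by (simp add: funpow_Suc_right del: funpow.simps)
    then have "y \<in> K (Suc n)" unfolding K_def using that by simp
    then show ?thesis using n Kn by simp
  qed
  have "Y \<subseteq> I n" using dsn Kn unfolding is_direct_sum_def addfn_eq by auto
  also have "\<dots> = phi ` I n" using n I_Suc by simp
  also have "\<dots> \<subseteq> phi ` Y" using submoduleD(1)[OF I_sub] by blast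
  finally show ?thesis using inj by blast
qed

lemma phi_inj: "y \<in> Y \<Longrightarrow> y' \<in> Y \<Longrightarrow> phi y = phi y' \<Longrightarrow> y = y'"
  using phi_bij phi_diff submodule_diff[OF YM] by (metis eq_iff_diff_eq_0)

theorem main: "\<exists>U. is_summand d N U \<and> module_iso d Y U"
proof -
  define U where "U = P ` Y"
  define W' where "W' = N \<inter> W"
  have UN: "is_submodule d U N"
  proof (rule submoduleI)
    show "U \<subseteq> N" unfolding U_def using PMN YsubM by blast
    show "0 \<in> U" unfolding U_def using P0 submoduleD(2)[OF YM] by (metis image_eqI)
    show "f + h \<in> U" if "f \<in> U" "h \<in> U" for f h
      using that unfolding U_def by (auto simp flip: Padd intro!: imageI submoduleD(3)[OF YM])
    show "smultfn c f \<in> U" if "f \<in> U" for c f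
      using that unfolding U_def by (auto simp flip: Psmult intro!: imageI submoduleD(4)[OF YM])
    show "act x f \<in> U" if "x permutes letters d" "f \<in> U" for x f
      using that unfolding U_def by (auto simp flip: Pact intro!: imageI submoduleD(5)[OF YM])
  qed
  have WN: "is_submodule d W' N"
  proof (rule submoduleI)
    show "W' \<subseteq> N" unfolding W'_def by blast
    show "0 \<in> W'" unfolding W'_def using submoduleD(2)[OF WM] submoduleD(2)[OF NM] by blast
    show "f + h \<in> W'" if "f \<in> W'" "h \<in> W'" for f h
      using that unfolding W'_def by (auto intro: submoduleD(3)[OF WM] submoduleD(3)[OF NM])
    show "smultfn c f \<in> W'" if "f \<in> W'" for c f
      using that unfolding W'_def by (auto intro: submoduleD(4)[OF WM] submoduleD(4)[OF NM])
    show "act x f \<in> W'" if "x permutes letters d" "f \<in> W'" for x f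
      using that unfolding W'_def by (auto intro: submoduleD(5)[OF WM] submoduleD(5)[OF NM])
  qed
  have int: "U \<inter> W' = {0}"
  proof
    show "{0} \<subseteq> U \<inter> W'" using submoduleD(2)[OF UN] submoduleD(2)[OF WN] by blast
    show "U \<inter> W' \<subseteq> {0}"
    proof
      fix m assume m: "m \<in> U \<inter> W'"
      then obtain y where y: "y \<in> Y" "m = P y" unfolding U_def by blast
      have "phi y = 0" unfolding phi_def using m y pi_W unfolding W'_def by simp
      then have "y = 0" using conjunct1[OF phi_bij] y by simp
      then show "m \<in> {0}" using y P0 by simp
    qed
  qed
  have sum: "N = {u + w |u w. u \<in> U \<and> w \<in> W'}"
  proof
    show "N \<subseteq> {u + w |u w. u \<in> U \<and> w \<in> W'}"
    proof
      fix m assume m: "m \<in> N"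
      then have mM: "m \<in> M" using NsubM by blast
      then have "pi m \<in> Y" by (rule pi_M)
      then have "pi m \<in> phi ` Y" using conjunct2[OF phi_bij] by (rule subsetD[rotated])
      then obtain y where y: "y \<in> Y" "phi y = pi m" by (rule imageE) simp
      have uU: "P y \<in> U" unfolding U_def using y by blast
      have wN: "m - P y \<in> N" using submodule_diff[OF NM m] PMN YsubM y by blast
      then have wM: "m - P y \<in> M" using NsubM by blast
      have "pi (m - P y) = 0" using pi_diff[OF mM PY[OF y(1)]] y unfolding phi_def by simp
      then have "m - P y \<in> W" using pi_M(2)[OF wM] by simp
      then have "m - P y \<in> W'" unfolding W'_def using wN by blast
      moreover have "m = P y + (m - P y)" by simp
      ultimately show "m \<in> {u + w |u w. u \<in> U \<and> w \<in> W'}" using uU by blast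
    qed
    show "{u + w |u w. u \<in> U \<and> w \<in> W'} \<subseteq> N"
      using submoduleD(1)[OF UN] submoduleD(1)[OF WN] submoduleD(3)[OF NM] by blast
  qed
  have "is_direct_sum d N U W'"
    unfolding is_direct_sum_def addfn_eq zerofn_eq using UN WN int sum by simp
  then have "is_summand d N U" unfolding is_summand_def by blast
  moreover have "module_iso d Y U"
    unfolding module_iso_def
  proof (intro exI[of _ P] conjI allI ballI impI)
    show "bij_betw P Y U" unfolding U_def bij_betw_def
    proof
      show "inj_on P Y"
        by (rule inj_onI) (metis phi_def phi_inj)
    qed simp
    show "P (addfn f h) = addfn (P f) (P h)" for f h by (simp add: addfn_eq Padd)
    show "P (smultfn c f) = smultfn c (P f)" for c f by (simp add: Psmult)
    show "P (act x f) = act x (P f)" if "x permutes letters d" for x f using that by (simp add: Pact)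
  qed
  ultimately show ?thesis by blast
qed

end


definition LL :: "nat \<Rightarrow> nat \<Rightarrow> nat \<Rightarrow> nat list" where
  "LL a b c = [a, b] @ replicate c 1"

lemma sum_list_rep1: "sum_list (replicate c (Suc 0)) = c"
  by (induction c) auto

lemma take_rep1: "sum_list (take k (replicate c (Suc 0))) = min k c"
  by (simp add: take_replicate sum_list_rep1)

locale conc =
  fixes a b c :: nat
  assumes a1: "1 \<le> a" and b1: "1 \<le> b"
begin

abbreviation "L \<equiv> LL a b c"
abbreviation "s \<equiv> a + b"
abbreviation "dd \<equiv> a + b + c"

lemma sumL: "sum_list L = dd" by (simp add: LL_def sum_list_rep1)
lemma lenL: "length L = c + 2" by (simp add: LL_def)

lemma preL: "sum_list (take m L) = (if m = 0 then 0 else if m = 1 then a else a + b + min (m - 2) c)"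
proof (cases m)
  case (Suc m')
  then show ?thesis
  proof (cases m')
    case (Suc k)
    then show ?thesis using \<open>m = Suc m'\<close> by (simp add: LL_def take_rep1 del: take_replicate)
  qed (simp add: LL_def)
qed (simp add: LL_def)

lemma blk_set: "blk L j = card {i. i < c + 2 \<and> sum_list (take (Suc i) L) \<le> j}"
  unfolding blk_def lenL by simp

lemma blkL1: "j < a \<Longrightarrow> blk L j = 0"
proof -
  assume j: "j < a"
  have "{i. i < c + 2 \<and> sum_list (take (Suc i) L) \<le> j} = {}"
    using j by (auto simp only: preL) (auto split: if_splits)
  then show ?thesis by (simp add: blk_set)
qed

lemma blkL2: "a \<le> j \<Longrightarrow> j < s \<Longrightarrow> blk L j = 1"
proof -
  assume j: "a \<le> j" "j < s"
  have "{i. i < c + 2 \<and> sum_list (take (Suc i) L) \<le> j} = {0}"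
    using j by (auto simp only: preL) (auto split: if_splits)
  then show ?thesis by (simp add: blk_set)
qed

lemma blkL3: "s \<le> j \<Longrightarrow> j < dd \<Longrightarrow> blk L j = j - s + 2"
proof -
  assume j: "s \<le> j" "j < dd"
  have "{i. i < c + 2 \<and> sum_list (take (Suc i) L) \<le> j} = {..< j - s + 2}"
    using j by (auto simp only: preL) (auto split: if_splits)
  then show ?thesis by (simp add: blk_set)
qed

lemma colx1: "j < a \<Longrightarrow> colx L j = j"
  by (simp add: colx_def blkL1)
lemma colx2: "a \<le> j \<Longrightarrow> j < s \<Longrightarrow> colx L j = j - a"
  by (simp add: colx_def blkL2 preL)
lemma colx3: "s \<le> j \<Longrightarrow> j < dd \<Longrightarrow> colx L j = 0"
  by (simp add: colx_def blkL3 preL)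

lemma blk3: "j < dd \<Longrightarrow> blk [a, b, c] j = (if j < a then 0 else if j < s then 1 else 2)"
proof -
  assume j: "j < dd"
  have "{i. i < length [a,b,c] \<and> sum_list (take (Suc i) [a,b,c]) \<le> j} =
      {..< (if j < a then 0 else if j < s then 1 else 2)}"
    using j by (auto simp: less_Suc_eq numeral_2_eq_2)
  then show ?thesis by (simp add: blk_def)
qed

lemma blkL_le1: "j < dd \<Longrightarrow> blk L j \<le> 1 \<longleftrightarrow> j < s"
  using blkL1 blkL2 blkL3 by (cases "j < a"; cases "j < s") auto

lemma blkL_eq: "x < dd \<Longrightarrow> y < dd \<Longrightarrow>
    blk L x = blk L y \<longleftrightarrow> (x < s \<and> y < s \<and> (x < a \<longleftrightarrow> y < a)) \<or> x = y"
  using blkL1 blkL2 blkL3 by (cases "x < a"; cases "x < s"; cases "y < a"; cases "y < s") auto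

lemma blkcol_inj: "x < dd \<Longrightarrow> y < dd \<Longrightarrow> blk L x = blk L y \<Longrightarrow> colx L x = colx L y \<Longrightarrow> x = y"
  using blkL_eq colx1 colx2 by (cases "x < a"; cases "y < a") auto

end


lemma fact_nz:
  assumes "c < CHAR('k::field)"
  shows "of_nat (fact c) \<noteq> (0::'k)"
proof -
  have "(of_nat (fact c) :: 'k) = (\<Prod>i\<in>{0..<c}. of_nat (Suc i))"
    by (simp add: fact_prod_Suc of_nat_prod)
  moreover have "(of_nat (Suc i) :: 'k) \<noteq> 0" if "i \<in> {0..<c}" for i
  proof
    assume "(of_nat (Suc i) :: 'k) = 0"
    then have "CHAR('k) dvd Suc i" by (simp only: of_nat_eq_0_iff_char_dvd)
    then have "CHAR('k) \<le> Suc i" by (rule dvd_imp_le) simp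
    then show False using that assms by simp
  qed
  ultimately show ?thesis by (simp add: prod_zero_iff)
qed

lemma perm_right_iff:
  assumes "x permutes S"
  shows "g \<circ> x permutes S \<longleftrightarrow> g permutes S"
proof
  assume "g \<circ> x permutes S"
  moreover have "g \<circ> x \<circ> inv x = g" by (simp add: comp_assoc permutes_inv_o[OF assms])
  ultimately show "g permutes S" using permutes_compose[OF permutes_inv[OF assms]] by metis
qed (rule permutes_compose[OF assms])

lemma perm_left_iff:
  assumes "x permutes S"
  shows "x \<circ> g permutes S \<longleftrightarrow> g permutes S"
proof
  assume "x \<circ> g permutes S"
  moreover have "inv x \<circ> (x \<circ> g) = g" by (simp add: o_assoc permutes_inv_o[OF assms])
  ultimately show "g permutes S" using permutes_compose[OF _ permutes_inv[OF assms]] by metis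
qed (rule permutes_compose[OF _ assms])

lemma ind_sub: "is_submodule d (ind_module d H \<chi> :: 'k::field fn set) UNIV"
proof (rule submoduleI)
  show "0 \<in> ind_module d H \<chi>" by (simp add: ind_module_def)
  show "f + h \<in> ind_module d H \<chi>" if "f \<in> ind_module d H \<chi>" "h \<in> ind_module d H \<chi>" for f h
    using that by (simp add: ind_module_def algebra_simps)
  show "smultfn c f \<in> ind_module d H \<chi>" if "f \<in> ind_module d H \<chi>" for c f
    using that by (simp add: ind_module_def smultfn_def algebra_simps)
  show "act x f \<in> ind_module d H \<chi>" if x: "x permutes letters d" and f: "f \<in> ind_module d H \<chi>" for x f
  proof -
    have f1: "\<forall>g. \<not> g permutes letters d \<longrightarrow> f g = 0"
      and f2: "\<forall>h\<in>H. \<forall>g. g permutes letters d \<longrightarrow> f (h \<circ> g) = \<chi> h * f g"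
      using f by (auto simp: ind_module_def)
    show ?thesis unfolding ind_module_def act_def
    proof (intro CollectI conjI allI impI ballI)
      show "f (g \<circ> x) = 0" if "\<not> g permutes letters d" for g
        using f1 that perm_right_iff[OF x, of g] by blast
      show "f (h \<circ> g \<circ> x) = \<chi> h * f (g \<circ> x)" if "h \<in> H" "g permutes letters d" for h g
        using f2 that permutes_compose[OF x that(2)] by (simp add: comp_assoc)
    qed
  qed
qed simp

lemma submodule_mono: "is_submodule d U X \<Longrightarrow> U \<subseteq> X' \<Longrightarrow> is_submodule d U X'"
  by (simp add: is_submodule_def)

definition Pm :: "nat \<Rightarrow> nat \<Rightarrow> 'k::field fn \<Rightarrow> 'k fn" where
  "Pm s c f = (\<lambda>g. inverse (of_nat (fact c)) *
      (\<Sum>\<tau>\<in>{\<tau>. \<tau> permutes {s..<s+c}}. of_int (sign \<tau>) * f (\<tau> \<circ> g)))"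

lemma Pm_add: "Pm s c (f + h) = Pm s c f + Pm s c h"
  by (simp add: Pm_def fun_eq_iff sum.distrib algebra_simps)
lemma Pm_smult: "Pm s c (smultfn k f) = smultfn k (Pm s c f)"
  by (simp add: Pm_def fun_eq_iff smultfn_def sum_distrib_left algebra_simps)
lemma Pm_act: "Pm s c (act x f) = act x (Pm s c f)"
  by (simp add: Pm_def fun_eq_iff act_def o_assoc)

context conc begin

abbreviation "T \<equiv> {\<tau>. \<tau> permutes {s..<dd}}"

lemma letters_dd: "letters dd = {0..<dd}" by (simp add: letters_def)

lemma tau_letters: "\<tau> permutes {s..<dd} \<Longrightarrow> \<tau> permutes letters dd"
  by (rule permutes_subset) (auto simp: letters_def)

lemma perm_lt: "h permutes letters dd \<Longrightarrow> j < dd \<Longrightarrow> h j < dd"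
  using permutes_in_image[of h "letters dd" j] by (simp add: letters_def)

lemma perm_ge: "h permutes letters dd \<Longrightarrow> dd \<le> j \<Longrightarrow> h j = j"
  using permutes_not_in[of h "letters dd" j] by (simp add: letters_def)

lemma tau_facts:
  assumes "\<tau> permutes {s..<dd}"
  shows "\<And>j. j < s \<Longrightarrow> \<tau> j = j" "\<And>j. dd \<le> j \<Longrightarrow> \<tau> j = j"
    "\<And>j. s \<le> j \<Longrightarrow> j < dd \<Longrightarrow> s \<le> \<tau> j \<and> \<tau> j < dd"
  using permutes_not_in[OF assms] permutes_in_image[OF assms] by auto

lemma young3:
  assumes "h \<in> young_subgroup dd [a, b, c]" "j < dd"
  shows "(h j < s \<longleftrightarrow> j < s) \<and> (h j < a \<longleftrightarrow> j < a)" "h j < dd"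
proof -
  have hp: "h permutes letters dd" using assms by (simp add: young_subgroup_def)
  have hj: "h j < dd" using perm_lt[OF hp assms(2)] .
  have "\<forall>j\<in>letters dd. blk [a, b, c] (h j) = blk [a, b, c] j" using assms(1) unfolding young_subgroup_def by blast
  moreover have "j \<in> letters dd" using assms(2) by (simp add: letters_def)
  ultimately have "blk [a, b, c] (h j) = blk [a, b, c] j" by blast
  then have "(if h j < a then 0 else if h j < s then 1 else 2) = (if j < a then 0 else if j < s then 1 else (2::nat))"
    by (simp only: blk3[OF hj] blk3[OF assms(2)])
  then show "(h j < s \<longleftrightarrow> j < s) \<and> (h j < a \<longleftrightarrow> j < a)"
    by (cases "h j < a"; cases "h j < s"; cases "j < a"; cases "j < s") simp_all
  show "h j < dd" by (fact hj)
qed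

lemma youngL:
  assumes "h \<in> young_subgroup dd L" "j < dd"
  shows "s \<le> j \<Longrightarrow> h j = j" "j < s \<Longrightarrow> h j < s \<and> (h j < a \<longleftrightarrow> j < a)"
proof -
  have hp: "h permutes letters dd" using assms by (simp add: young_subgroup_def sumL)
  have hj: "h j < dd" using perm_lt[OF hp assms(2)] .
  have "\<forall>j\<in>letters dd. blk L (h j) = blk L j" using assms(1) unfolding young_subgroup_def sumL by blast
  moreover have "j \<in> letters dd" using assms(2) by (simp add: letters_def)
  ultimately have "blk L (h j) = blk L j" by blast
  then have "(h j < s \<and> j < s \<and> (h j < a \<longleftrightarrow> j < a)) \<or> h j = j"
    using blkL_eq[OF hj assms(2)] by simp
  then show "s \<le> j \<Longrightarrow> h j = j" "j < s \<Longrightarrow> h j < s \<and> (h j < a \<longleftrightarrow> j < a)" by auto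
qed

abbreviation "MM \<equiv> perm_module L :: 'k::field fn set"
abbreviation "NN \<equiv> signed_perm_module [a, b] [c] :: 'k::field fn set"

lemma MM_eq: "perm_module L = ind_module dd (young_subgroup dd L) (\<lambda>h. 1)"
  by (simp add: perm_module_def sumL)
lemma NN_eq: "signed_perm_module [a, b] [c] = ind_module dd (young_subgroup dd [a, b, c]) (sign_part s)"
  by (simp add: signed_perm_module_def add.assoc)

lemma youngL_sub: "h \<in> young_subgroup dd L \<Longrightarrow> h \<in> young_subgroup dd [a, b, c] \<and> sign_part s h = 1"
proof -
  assume h: "h \<in> young_subgroup dd L"
  have hp: "h permutes letters dd" using h by (simp add: young_subgroup_def sumL)
  have "blk [a, b, c] (h j) = blk [a, b, c] j" if "j \<in> letters dd" for j
  proof -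
    have j: "j < dd" using that by (simp add: letters_def)
    show ?thesis
    proof (cases "j < s")
      case True
      have hj: "h j < dd" using perm_lt[OF hp j] .
      have "h j < s \<and> (h j < a \<longleftrightarrow> j < a)" using youngL(2)[OF h j True] .
      then show ?thesis using True by (simp add: blk3[OF j] blk3[OF hj])
    next
      case False
      then show ?thesis using youngL[OF h j] by simp
    qed
  qed
  then have "h \<in> young_subgroup dd [a, b, c]" using hp by (simp add: young_subgroup_def)
  moreover have "(\<lambda>j. if s \<le> j then h j else j) = id"
  proof
    fix j show "(if s \<le> j then h j else j) = id j"
      using youngL(1)[OF h, of j] perm_ge[OF hp, of j] by (cases "j < dd") auto
  qed
  then have "sign_part s h = 1" by (simp add: sign_part_def)
  ultimately show ?thesis by simp
qed

lemma NM: "is_submodule dd NN MM"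
proof -
  have "NN \<subseteq> MM"
  proof
    fix f :: "'k::field fn" assume "f \<in> NN"
    then have f1: "\<forall>g. \<not> g permutes letters dd \<longrightarrow> f g = 0"
      and f2: "\<forall>h\<in>young_subgroup dd [a, b, c]. \<forall>g. g permutes letters dd \<longrightarrow> f (h \<circ> g) = sign_part s h * f g"
      unfolding NN_eq ind_module_def by auto
    have "f (h \<circ> g) = f g" if h: "h \<in> young_subgroup dd L" and g: "g permutes letters dd" for h g
    proof -
      have h3: "h \<in> young_subgroup dd [a, b, c]" and sp: "sign_part s h = (1::'k)"
        using youngL_sub[OF h] by auto
      show ?thesis using f2 h3 g sp by simp
    qed
    then show "f \<in> MM" unfolding MM_eq ind_module_def using f1 by auto
  qed
  moreover have "is_submodule dd (NN :: 'k::field fn set) UNIV" unfolding NN_eq by (rule ind_sub)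
  ultimately show ?thesis by (rule submodule_mono[rotated])
qed

lemma MS: "MM \<subseteq> Supp dd"
  unfolding MM_eq by (auto simp: ind_module_def Supp_def)

end


context conc begin

lemma th_perm:
  assumes h: "h \<in> young_subgroup dd [a, b, c]"
  shows "(\<lambda>j. if s \<le> j then h j else j) permutes {s..<dd}"
proof (rule bij_imp_permutes)
  let ?t = "\<lambda>j. if s \<le> j then h j else j"
  have hp: "h permutes letters dd" using h by (simp add: young_subgroup_def)
  have inj: "inj_on ?t {s..<dd}"
  proof (rule inj_onI)
    fix x y assume "x \<in> {s..<dd}" "y \<in> {s..<dd}" "?t x = ?t y"
    then have "h x = h y" by simp
    then show "x = y" using permutes_inj[OF hp] by (simp add: inj_eq)
  qed
  have img: "?t ` {s..<dd} \<subseteq> {s..<dd}"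
  proof
    fix y assume "y \<in> ?t ` {s..<dd}"
    then obtain j where j: "s \<le> j" "j < dd" "y = h j" by auto
    then show "y \<in> {s..<dd}" using young3[OF h j(2)] by auto
  qed
  show "bij_betw ?t {s..<dd} {s..<dd}"
    unfolding bij_betw_def using endo_inj_surj[OF finite_atLeastLessThan img inj] inj by simp
  show "?t x = x" if "x \<notin> {s..<dd}" for x using that perm_ge[OF hp, of x] by auto
qed

lemma h1_young:
  assumes h: "h \<in> young_subgroup dd [a, b, c]"
  shows "(\<lambda>j. if j < s then h j else j) \<in> young_subgroup dd L"
proof -
  let ?t = "\<lambda>j. if j < s then h j else j"
  have hp: "h permutes letters dd" using h by (simp add: young_subgroup_def)
  have "?t permutes {0..<s}"
  proof (rule bij_imp_permutes)
    have inj: "inj_on ?t {0..<s}"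
    proof (rule inj_onI)
      fix x y assume "x \<in> {0..<s}" "y \<in> {0..<s}" "?t x = ?t y"
      then have "h x = h y" by simp
      then show "x = y" using permutes_inj[OF hp] by (simp add: inj_eq)
    qed
    have img: "?t ` {0..<s} \<subseteq> {0..<s}"
    proof
      fix y assume "y \<in> ?t ` {0..<s}"
      then obtain j where j: "j < s" "y = h j" by auto
      then have "j < dd" by simp
      then show "y \<in> {0..<s}" using young3[OF h] j by auto
    qed
    show "bij_betw ?t {0..<s} {0..<s}"
      unfolding bij_betw_def using endo_inj_surj[OF finite_atLeastLessThan img inj] inj by simp
    show "?t x = x" if "x \<notin> {0..<s}" for x using that by auto
  qed
  then have tp: "?t permutes letters dd" by (rule permutes_subset) (auto simp: letters_def)
  have "blk L (?t j) = blk L j" if "j \<in> letters dd" for j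
  proof (cases "j < s")
    case True
    have j: "j < dd" using that by (simp add: letters_def)
    have "h j < s \<and> (h j < a \<longleftrightarrow> j < a)" using young3[OF h j] True by simp
    then show ?thesis using True blkL_eq[of "h j" j] j by simp
  qed simp
  then show ?thesis using tp by (simp add: young_subgroup_def sumL)
qed

lemma comp_decomp:
  assumes h: "h \<in> young_subgroup dd [a, b, c]" and t: "\<tau> permutes {s..<dd}"
  shows "\<tau> \<circ> h = (\<lambda>j. if j < s then h j else j) \<circ> (\<tau> \<circ> (\<lambda>j. if s \<le> j then h j else j))"
proof
  fix j
  have hp: "h permutes letters dd" using h by (simp add: young_subgroup_def)
  show "(\<tau> \<circ> h) j = ((\<lambda>j. if j < s then h j else j) \<circ> (\<tau> \<circ> (\<lambda>j. if s \<le> j then h j else j))) j"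
  proof (cases "j < dd")
    case True
    note y = young3[OF h True]
    show ?thesis
    proof (cases "j < s")
      case True
      then show ?thesis using y tau_facts[OF t] by simp
    next
      case False
      then have "s \<le> h j" "h j < dd" using y by auto
      then have "s \<le> \<tau> (h j)" using tau_facts(3)[OF t] by blast
      then show ?thesis using False by simp
    qed
  next
    case False
    then show ?thesis using perm_ge[OF hp, of j] tau_facts[OF t] by simp
  qed
qed

lemma PMN: "f \<in> (MM :: 'k::field fn set) \<Longrightarrow> Pm s c f \<in> NN"
proof -
  assume f: "f \<in> MM"
  have f1: "\<forall>g. \<not> g permutes letters dd \<longrightarrow> f g = 0"
    and f2: "\<forall>h\<in>young_subgroup dd L. \<forall>g. g permutes letters dd \<longrightarrow> f (h \<circ> g) = f g"
    using f unfolding MM_eq ind_module_def by auto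
  show ?thesis unfolding NN_eq ind_module_def
  proof (intro CollectI conjI allI impI ballI)
    fix g :: "nat \<Rightarrow> nat" assume g: "\<not> g permutes letters dd"
    have "f (\<tau> \<circ> g) = 0" if "\<tau> \<in> T" for \<tau>
      using f1 g perm_left_iff[OF tau_letters, of \<tau> g] that by auto
    then show "Pm s c f g = 0" by (simp add: Pm_def)
  next
    fix h g assume h: "h \<in> young_subgroup dd [a, b, c]" and g: "g permutes letters dd"
    define th where "th = (\<lambda>j. if s \<le> j then h j else j)"
    define h1 where "h1 = (\<lambda>j. if j < s then h j else j)"
    have thp: "th permutes {s..<dd}" unfolding th_def by (rule th_perm[OF h])
    have h1y: "h1 \<in> young_subgroup dd L" unfolding h1_def by (rule h1_young[OF h])
    have fin: "finite {s..<dd}" by simp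
    have step1: "f (\<tau> \<circ> (h \<circ> g)) = f ((\<tau> \<circ> th) \<circ> g)" if t: "\<tau> \<in> T" for \<tau>
    proof -
      have "\<tau> \<circ> (h \<circ> g) = h1 \<circ> ((\<tau> \<circ> th) \<circ> g)"
      proof -
        have e: "\<tau> \<circ> h = h1 \<circ> (\<tau> \<circ> th)"
          using comp_decomp[OF h, of \<tau>] t unfolding h1_def th_def by simp
        have "\<tau> \<circ> (h \<circ> g) = (\<tau> \<circ> h) \<circ> g" by (simp add: comp_assoc)
        also have "\<dots> = h1 \<circ> ((\<tau> \<circ> th) \<circ> g)" by (simp only: e comp_assoc)
        finally show ?thesis .
      qed
      moreover have "(\<tau> \<circ> th) \<circ> g permutes letters dd"
        using permutes_compose[OF g permutes_compose[OF tau_letters[OF thp] tau_letters]] t by simp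
      ultimately show ?thesis using f2 h1y by simp
    qed
    define G where "G = (\<lambda>\<tau>'. (of_int (sign (\<tau>' \<circ> inv th)) :: 'k) * f (\<tau>' \<circ> g))"
    have step2: "G (\<tau> \<circ> th) = of_int (sign \<tau>) * f ((\<tau> \<circ> th) \<circ> g)" for \<tau>
    proof -
      have "\<tau> \<circ> th \<circ> inv th = \<tau>" by (simp add: comp_assoc permutes_inv_o[OF thp])
      then show ?thesis by (simp add: G_def)
    qed
    have step3: "G \<tau> = of_int (sign th) * (of_int (sign \<tau>) * f (\<tau> \<circ> g))" if t: "\<tau> \<in> T" for \<tau>
    proof -
      have "permutation \<tau>" using t permutes_imp_permutation[OF fin] by auto
      moreover have "permutation (inv th)" using permutes_imp_permutation[OF fin permutes_inv[OF thp]] .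
      moreover have "permutation th" using permutes_imp_permutation[OF fin thp] .
      ultimately have "sign (\<tau> \<circ> inv th) = sign \<tau> * sign th" by (simp add: sign_compose sign_inverse)
      then show ?thesis by (simp add: G_def)
    qed
    have "(\<Sum>\<tau>\<in>T. (of_int (sign \<tau>) :: 'k) * f (\<tau> \<circ> (h \<circ> g)))
        = (\<Sum>\<tau>\<in>T. G (\<tau> \<circ> th))"
      using step1 step2 by simp
    also have "\<dots> = (\<Sum>\<tau>\<in>T. G \<tau>)"
      using sum_permutations_compose_right[OF thp, of G] by simp
    also have "\<dots> = of_int (sign th) * (\<Sum>\<tau>\<in>T. of_int (sign \<tau>) * f (\<tau> \<circ> g))"
      using step3 by (simp add: sum_distrib_left)
    finally have "(\<Sum>\<tau>\<in>T. (of_int (sign \<tau>) :: 'k) * f (\<tau> \<circ> (h \<circ> g)))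
        = of_int (sign th) * (\<Sum>\<tau>\<in>T. of_int (sign \<tau>) * f (\<tau> \<circ> g))" .
    moreover have "sign_part s h = (of_int (sign th) :: 'k)" by (simp add: sign_part_def th_def)
    ultimately show "Pm s c f (h \<circ> g) = sign_part s h * Pm s c f g"
      by (simp add: Pm_def algebra_simps)
  qed
qed

end


context conc begin

abbreviation "CC \<equiv> column_stabilizer L id"

lemma CC_eq: "\<sigma> \<in> CC \<longleftrightarrow> \<sigma> permutes letters dd \<and> (\<forall>j\<in>letters dd. colx L (\<sigma> j) = colx L j)"
  by (simp add: column_stabilizer_def sumL)

lemma tau_col: "\<tau> permutes {s..<dd} \<Longrightarrow> j < dd \<Longrightarrow> colx L (\<tau> j) = colx L j"
proof -
  assume t: "\<tau> permutes {s..<dd}" and j: "j < dd"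
  show ?thesis
  proof (cases "j < s")
    case True then show ?thesis using tau_facts(1)[OF t] by simp
  next
    case False
    then have "s \<le> \<tau> j" "\<tau> j < dd" using tau_facts(3)[OF t, of j] j by auto
    then show ?thesis using colx3 False j by simp
  qed
qed

lemma CC_comp: "\<sigma> \<in> CC \<Longrightarrow> \<tau> permutes {s..<dd} \<Longrightarrow> \<sigma> \<circ> \<tau> \<in> CC"
proof -
  assume sg: "\<sigma> \<in> CC" and t: "\<tau> permutes {s..<dd}"
  have sp: "\<sigma> permutes letters dd" and sc: "\<forall>j\<in>letters dd. colx L (\<sigma> j) = colx L j"
    using sg CC_eq by auto
  have "\<sigma> \<circ> \<tau> permutes letters dd" using permutes_compose[OF tau_letters[OF t] sp] .
  moreover have "colx L (\<sigma> (\<tau> j)) = colx L j" if "j \<in> letters dd" for j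
  proof -
    have j: "j < dd" using that by (simp add: letters_def)
    have "\<tau> j \<in> letters dd" using perm_lt[OF tau_letters[OF t] j] by (simp add: letters_def)
    then show ?thesis using sc tau_col[OF t j] by simp
  qed
  ultimately show ?thesis using CC_eq by simp
qed

lemma CC_bij: "\<tau> permutes {s..<dd} \<Longrightarrow> bij_betw (\<lambda>\<sigma>. \<sigma> \<circ> \<tau>) CC CC"
proof -
  assume t: "\<tau> permutes {s..<dd}"
  have ti: "inv \<tau> permutes {s..<dd}" using permutes_inv[OF t] .
  show ?thesis
  proof (rule bij_betw_byWitness[where f' = "\<lambda>\<sigma>. \<sigma> \<circ> inv \<tau>"])
    show "\<forall>\<sigma>\<in>CC. \<sigma> \<circ> \<tau> \<circ> inv \<tau> = \<sigma>" by (simp add: comp_assoc permutes_inv_o[OF t])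
    show "\<forall>\<sigma>\<in>CC. \<sigma> \<circ> inv \<tau> \<circ> \<tau> = \<sigma>" by (simp add: comp_assoc permutes_inv_o[OF t])
    show "(\<lambda>\<sigma>. \<sigma> \<circ> \<tau>) ` CC \<subseteq> CC" using CC_comp[OF _ t] by blast
    show "(\<lambda>\<sigma>. \<sigma> \<circ> inv \<tau>) ` CC \<subseteq> CC" using CC_comp[OF _ ti] by blast
  qed
qed

lemma key:
  assumes t: "\<tau> permutes {s..<dd}" and x: "x < dd" and y: "y < dd"
  shows "blk L (\<tau> x) = blk L y \<longleftrightarrow> blk L x = blk L (inv \<tau> y)"
proof -
  have ti: "inv \<tau> permutes {s..<dd}" using permutes_inv[OF t] .
  have tx: "\<tau> x < dd" using perm_lt[OF tau_letters[OF t] x] .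
  have ty: "inv \<tau> y < dd" using perm_lt[OF tau_letters[OF ti] y] .
  have A: "x < s \<Longrightarrow> \<tau> x = x" using tau_facts(1)[OF t] .
  have B: "\<not> x < s \<Longrightarrow> s \<le> \<tau> x" using tau_facts(3)[OF t, of x] x by auto
  have C: "y < s \<Longrightarrow> inv \<tau> y = y" using tau_facts(1)[OF ti] .
  have D: "\<not> y < s \<Longrightarrow> s \<le> inv \<tau> y" using tau_facts(3)[OF ti, of y] y by auto
  have E: "\<tau> x = y \<longleftrightarrow> x = inv \<tau> y" using permutes_inv_eq[OF t, of y x] by auto
  show ?thesis
    unfolding blkL_eq[OF tx y] blkL_eq[OF x ty]
    using A B C D E by (cases "x < s"; cases "y < s") auto
qed

lemma tab_shift:
  assumes sp: "\<sigma> permutes letters dd" and t: "\<tau> permutes {s..<dd}"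
  shows "tabloid_vec L (id \<circ> inv \<sigma>) (\<tau> \<circ> g) = (tabloid_vec L (id \<circ> inv (\<sigma> \<circ> \<tau>)) g :: 'k::field)"
proof -
  have tl: "\<tau> permutes letters dd" using tau_letters[OF t] .
  have inv_eq: "inv (\<sigma> \<circ> \<tau>) = inv \<tau> \<circ> inv \<sigma>"
    using o_inv_distrib[OF permutes_bij[OF sp] permutes_bij[OF tl]] .
  show ?thesis
  proof (cases "g permutes letters dd")
    case False
    then have "\<not> \<tau> \<circ> g permutes letters dd" using perm_left_iff[OF tl] by simp
    then show ?thesis using False by (simp add: tabloid_vec_def sumL)
  next
    case True
    then have tg: "\<tau> \<circ> g permutes letters dd" using perm_left_iff[OF tl] by simp
    have "blk L (\<tau> (g j)) = blk L (inv \<sigma> j) \<longleftrightarrow> blk L (g j) = blk L (inv \<tau> (inv \<sigma> j))"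
      if "j \<in> letters dd" for j
    proof -
      have j: "j < dd" using that by (simp add: letters_def)
      show ?thesis using key[OF t perm_lt[OF True j] perm_lt[OF permutes_inv[OF sp] j]] .
    qed
    then have "(\<forall>j\<in>letters dd. blk L (\<tau> (g j)) = blk L (inv \<sigma> j)) \<longleftrightarrow>
               (\<forall>j\<in>letters dd. blk L (g j) = blk L (inv \<tau> (inv \<sigma> j)))" by blast
    then show ?thesis using True tg by (simp add: tabloid_vec_def sumL inv_eq)
  qed
qed

abbreviation "vv \<equiv> (polytabloid L id :: 'k::field fn)"

lemma vv_def': "(polytabloid L id g :: 'k::field) = (\<Sum>\<sigma>\<in>CC. of_int (sign \<sigma>) * tabloid_vec L (id \<circ> inv \<sigma>) g)"
  by (simp add: polytabloid_def)

lemma v_shift: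
  assumes t: "\<tau> permutes {s..<dd}"
  shows "(polytabloid L id (\<tau> \<circ> g) :: 'k::field) = of_int (sign \<tau>) * polytabloid L id g"
proof -
  define H where "H = (\<lambda>\<sigma>. (of_int (sign \<sigma>) :: 'k) * tabloid_vec L (id \<circ> inv \<sigma>) g)"
  have fin: "finite {s..<dd}" by simp
  have pt: "permutation \<tau>" using permutes_imp_permutation[OF fin t] .
  have eq: "(of_int (sign \<sigma>) :: 'k) * tabloid_vec L (id \<circ> inv \<sigma>) (\<tau> \<circ> g) = of_int (sign \<tau>) * H (\<sigma> \<circ> \<tau>)"
    if sg: "\<sigma> \<in> CC" for \<sigma>
  proof -
    have sp: "\<sigma> permutes letters dd" using sg CC_eq by auto
    have "permutation \<sigma>" using permutes_imp_permutation[OF _ sp] by (simp add: letters_def)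
    then have "sign (\<sigma> \<circ> \<tau>) = sign \<sigma> * sign \<tau>" using pt by (simp add: sign_compose)
    then have "sign \<tau> * sign (\<sigma> \<circ> \<tau>) = sign \<sigma> * (sign \<tau> * sign \<tau>)" by simp
    then have "sign \<tau> * sign (\<sigma> \<circ> \<tau>) = sign \<sigma>" by simp
    then have si: "(of_int (sign \<sigma>) :: 'k) = of_int (sign \<tau>) * of_int (sign (\<sigma> \<circ> \<tau>))"
      by (metis of_int_mult)
    show ?thesis unfolding H_def si tab_shift[OF sp t] by simp
  qed
  have "(polytabloid L id (\<tau> \<circ> g) :: 'k) = (\<Sum>\<sigma>\<in>CC. of_int (sign \<tau>) * H (\<sigma> \<circ> \<tau>))"
    unfolding vv_def' using eq by (rule sum.cong[OF refl])
  also have "\<dots> = of_int (sign \<tau>) * (\<Sum>\<sigma>\<in>CC. H (\<sigma> \<circ> \<tau>))" by (simp add: sum_distrib_left)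
  also have "(\<Sum>\<sigma>\<in>CC. H (\<sigma> \<circ> \<tau>)) = (\<Sum>\<sigma>\<in>CC. H \<sigma>)"
    using sum.reindex_bij_betw[OF CC_bij[OF t], of H] .
  also have "(\<Sum>\<sigma>\<in>CC. H \<sigma>) = polytabloid L id g" unfolding H_def vv_def' ..
  finally show ?thesis .
qed

lemma Pv:
  assumes "c < CHAR('k::field)"
  shows "Pm s c (polytabloid L id :: 'k fn) = polytabloid L id"
proof
  fix g
  have cardT: "card T = fact c" using card_permutations[of "{s..<dd}" c] by simp
  have "(\<Sum>\<tau>\<in>T. (of_int (sign \<tau>) :: 'k) * polytabloid L id (\<tau> \<circ> g))
      = (\<Sum>\<tau>\<in>T. polytabloid L id g)"
  proof (rule sum.cong[OF refl])
    fix \<tau> assume "\<tau> \<in> T"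
    then have "(polytabloid L id (\<tau> \<circ> g) :: 'k) = of_int (sign \<tau>) * polytabloid L id g"
      using v_shift by simp
    moreover have "(of_int (sign \<tau>) :: 'k) * of_int (sign \<tau>) = 1"
      by (metis of_int_mult sign_idempotent of_int_1)
    ultimately show "(of_int (sign \<tau>) :: 'k) * polytabloid L id (\<tau> \<circ> g) = polytabloid L id g"
      by (simp add: mult.assoc[symmetric])
  qed
  also have "\<dots> = of_nat (fact c) * polytabloid L id g" using cardT by simp
  finally show "Pm s c (polytabloid L id :: 'k fn) g = polytabloid L id g"
    using fact_nz[OF assms] by (simp add: Pm_def)
qed

lemma finite_CC: "finite CC"
proof -
  have "CC \<subseteq> {\<sigma>. \<sigma> permutes letters dd}" using CC_eq by auto
  moreover have "finite {\<sigma>. \<sigma> permutes letters dd}" by (rule finite_permutations) (simp add: letters_def)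
  ultimately show ?thesis by (rule finite_subset)
qed

lemma tab_id: "\<sigma> \<in> CC \<Longrightarrow> (tabloid_vec L (id \<circ> inv \<sigma>) id :: 'k::field) = (if \<sigma> = id then 1 else 0)"
proof -
  assume sg: "\<sigma> \<in> CC"
  have sp: "\<sigma> permutes letters dd" and sc: "\<forall>j\<in>letters dd. colx L (\<sigma> j) = colx L j"
    using sg CC_eq by auto
  have ip: "inv \<sigma> permutes letters dd" using permutes_inv[OF sp] .
  show ?thesis
  proof (cases "\<sigma> = id")
    case True then show ?thesis by (simp add: tabloid_vec_def)
  next
    case False
    have "\<not> (\<forall>j\<in>letters dd. blk L j = blk L (inv \<sigma> j))"
    proof
      assume A: "\<forall>j\<in>letters dd. blk L j = blk L (inv \<sigma> j)"
      have "inv \<sigma> j = j" for j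
      proof (cases "j < dd")
        case True
        define i where "i = inv \<sigma> j"
        have i: "i < dd" unfolding i_def using perm_lt[OF ip True] .
        have si: "\<sigma> i = j" unfolding i_def using permutes_inverses(1)[OF sp] .
        have "colx L j = colx L i" using sc i si by (auto simp: letters_def)
        moreover have "blk L j = blk L i" using A True unfolding i_def by (simp add: letters_def)
        ultimately have "i = j" using blkcol_inj[OF i True] by simp
        then show ?thesis unfolding i_def .
      next
        case False then show ?thesis using perm_ge[OF ip] by simp
      qed
      then have "inv \<sigma> = id" by auto
      then have "\<sigma> = id" using permutes_inv_inv[OF sp] by (metis inv_id)
      then show False using False by simp
    qed
    then show ?thesis using False by (simp add: tabloid_vec_def sumL)
  qed
qed

lemma v_id: "(polytabloid L id id :: 'k::field) = 1"
proof -
  have "(polytabloid L id id :: 'k) = (\<Sum>\<sigma>\<in>CC. if \<sigma> = id then of_int (sign \<sigma>) else 0)"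
    unfolding vv_def'
  proof (rule sum.cong[OF refl])
    fix \<sigma> assume sg: "\<sigma> \<in> CC"
    show "(of_int (sign \<sigma>) :: 'k) * tabloid_vec L (id \<circ> inv \<sigma>) id = (if \<sigma> = id then of_int (sign \<sigma>) else 0)"
      by (simp only: tab_id[OF sg]) simp
  qed
  also have "\<dots> = 1"
  proof -
    have "id \<in> CC" using CC_eq by simp
    then show ?thesis using finite_CC by (simp add: sum.delta')
  qed
  finally show ?thesis .
qed

lemma v_nz: "(polytabloid L id :: 'k::field fn) \<noteq> 0"
proof
  assume "(polytabloid L id :: 'k fn) = 0"
  then have "(polytabloid L id id :: 'k) = 0" by simp
  then show False using v_id[where 'k='k] by simp
qed

lemma v_specht: "(polytabloid L id :: 'k::field fn) \<in> specht_module L"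
  unfolding specht_module_def kspan_def
proof (intro CollectI exI conjI)
  show "finite {polytabloid L id :: 'k fn}" by simp
  show "{polytabloid L id :: 'k fn} \<subseteq> {polytabloid L g |g. g permutes letters (sum_list L)}" by auto
  show "(polytabloid L id :: 'k fn) = (\<lambda>g. \<Sum>v\<in>{polytabloid L id}. (\<lambda>_. 1) v * v g)" by simp
qed

end


theorem proposition3p5p1:
  fixes a b c :: nat
  assumes "CHAR('k::field) > 0"
    and "1 \<le> c" and "c < CHAR('k)"
    and "a \<ge> b" and "b \<ge> 1"
  shows "\<forall>Y :: 'k fn set. is_young_module ([a, b] @ replicate c 1) Y \<longrightarrow>
           (\<exists>U. is_summand (a + b + c) (signed_perm_module [a, b] [c]) U \<and>
                module_iso (a + b + c) Y U)"
proof (intro allI impI)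
  fix Y :: "'k fn set"
  assume yY: "is_young_module ([a, b] @ replicate c 1) Y"
  interpret C: conc a b c using assms by unfold_locales auto
  have Leq: "[a, b] @ replicate c 1 = LL a b c" by (simp add: LL_def)
  have y1: "is_summand (a + b + c) (perm_module (LL a b c)) Y"
    and y2: "indecomposable (a + b + c) Y"
    and y3: "specht_module (LL a b c) \<subseteq> Y"
    using yY unfolding is_young_module_def Leq C.sumL by auto
  obtain W where W: "is_direct_sum (a + b + c) (perm_module (LL a b c)) Y W"
    using y1 unfolding is_summand_def by blast
  have "setting (a + b + c) (perm_module (LL a b c)) (signed_perm_module [a, b] [c]) Y W
          (Pm (a + b) c) (polytabloid (LL a b c) id)"
  proof (unfold_locales)
    show "is_direct_sum (a + b + c) (perm_module (LL a b c)) Y W" by (fact W)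
    show "indecomposable (a + b + c) Y" by (fact y2)
    show "is_submodule (a + b + c) (signed_perm_module [a, b] [c]) (perm_module (LL a b c) :: 'k fn set)"
      by (rule C.NM)
    show "(perm_module (LL a b c) :: 'k fn set) \<subseteq> Supp (a + b + c)" by (rule C.MS)
    show "Pm (a + b) c (f + h) = Pm (a + b) c f + Pm (a + b) c h" for f h :: "'k fn" by (rule Pm_add)
    show "Pm (a + b) c (smultfn k f) = smultfn k (Pm (a + b) c f)" for k and f :: "'k fn" by (rule Pm_smult)
    show "Pm (a + b) c (act x f) = act x (Pm (a + b) c f)" for x and f :: "'k fn" by (rule Pm_act)
    show "Pm (a + b) c f \<in> signed_perm_module [a, b] [c]" if "f \<in> perm_module (LL a b c)" for f :: "'k fn"
      using C.PMN that by blast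
    show "(polytabloid (LL a b c) id :: 'k fn) \<in> Y" using C.v_specht y3 by blast
    show "(polytabloid (LL a b c) id :: 'k fn) \<noteq> 0" by (rule C.v_nz)
    show "Pm (a + b) c (polytabloid (LL a b c) id :: 'k fn) = polytabloid (LL a b c) id"
      by (rule C.Pv[OF assms(3)])
  qed
  then show "\<exists>U. is_summand (a + b + c) (signed_perm_module [a, b] [c]) U \<and> module_iso (a + b + c) Y U"
    by (rule setting.main)
qed


end
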